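(* Let $Y\ge0$ be a random variable with $1<\mathbb{E}Y\le\infty$. (i) There is a unique $\rho>0$ such that $\rho=1-\mathbb{E}e^{-\rho Y}$. (ii) If $\mathbb{E}Y^2<\infty$, then $\rho>\dfrac{2(\mathbb{E}Y-1)}{\mathbb{E}Y^2}$. (iii) If $\mathbb{E}Y^3<\infty$ and $8(\mathbb{E}Y-1)\mathbb{E}Y^3\le 3(\mathbb{E}Y^2)^2$, then $$\rho<\frac{3\mathbb{E}Y^2-\sqrt{9(\mathbb{E}Y^2)^2-24(\mathbb{E}Y-1)\mathbb{E}Y^3}}{2\mathbb{E}Y^3}=\frac{4(\mathbb{E}Y-1)}{\mathbb{E}Y^2+\sqrt{(\mathbb{E}Y^2)^2-\frac83(\mathbb{E}Y-1)\mathbb{E}Y^3}}\le\frac{2(\mathbb{E}Y-1)}{\mathbb{E}Y^2}\Bigl(1+\frac{8(\mathbb{E}Y-1)\mathbb{E}Y^3}{3(\mathbb{E}Y^2)^2}\Bigr).$$ (iv) Let $Y_n$, $n\ge1$, be random variables with $Y_n\ge0$ and $\mathbb{E}Y_n>1$, and let $\rho_n>0$ be the corresponding numbers with $\rho_n=1-\mathbb{E}e^{-\rho_nY_n}$. If $Y_n\to Y$ in distribution for some $Y$ with $\mathbb{E}Y>1$, then $\rho_n\to\rho>0$ where $\rho$ satisfies $\rho=1-\mathbb{E}e^{-\rho Y}$. If instead $Y_n\to Y$ in distribution with $\mathbb{E}Y\le1$, then $\rho_n\to0$. *)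

theory Defs
  imports "HOL-Probability.Probability"
begin

text \<open>A nonnegative real random variable Y is represented by its law mu
  (a Borel probability measure on the reals concentrated on [0,inf)).\<close>
definition nonneg_law :: "real measure \<Rightarrow> bool" where
  "nonneg_law \<mu> \<longleftrightarrow> real_distribution \<mu> \<and> (AE y in \<mu>. 0 \<le> y)"

definition moment :: "real measure \<Rightarrow> nat \<Rightarrow> ennreal" where
  "moment \<mu> k = (\<integral>\<^sup>+ y. ennreal (y ^ k) \<partial>\<mu>)"

definition solves_eq :: "real measure \<Rightarrow> real \<Rightarrow> bool" where
  "solves_eq \<mu> \<rho> \<longleftrightarrow> \<rho> = 1 - (\<integral> y. exp (- (\<rho> * y)) \<partial>\<mu>)"

end

theory Submission
  imports Defs
begin


definition psi :: "real \<Rightarrow> real \<Rightarrow> real" where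
  "psi r y = (1 - exp (-(r * max y 0))) / r"

lemma T2: assumes "(x::real) > 0" shows "exp (-x) < 1 - x + x^2/2"
proof -
  obtain t where "exp (-x) = (\<Sum>m<3. (-x) ^ m / fact m) + exp t / fact 3 * (-x)^3"
    using Maclaurin_exp_lt[of "-x" 3] assms by auto
  moreover have "exp t / fact 3 * (-x)^3 < 0" using assms by (simp add: mult_pos_neg)
  ultimately show ?thesis by (simp add: numeral_eq_Suc lessThan_Suc field_simps power2_eq_square)
qed

lemma T3: assumes "(x::real) > 0" shows "exp (-x) > 1 - x + x^2/2 - x^3/6"
proof -
  obtain t where "exp (-x) = (\<Sum>m<4. (-x) ^ m / fact m) + exp t / fact 4 * (-x)^4"
    using Maclaurin_exp_lt[of "-x" 4] assms by auto
  moreover have "exp t / fact 4 * (-x)^4 > 0" using assms by simp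
  ultimately show ?thesis by (simp add: numeral_eq_Suc lessThan_Suc field_simps power2_eq_square)
qed

lemma T1: assumes "(x::real) > 0" shows "exp (-x) > 1 - x"
proof -
  obtain t where "exp (-x) = (\<Sum>m<2. (-x) ^ m / fact m) + exp t / fact 2 * (-x)^2"
    using Maclaurin_exp_lt[of "-x" 2] assms by auto
  moreover have "exp t / fact 2 * (-x)^2 > 0" using assms by simp
  ultimately show ?thesis by (simp add: numeral_eq_Suc lessThan_Suc field_simps power2_eq_square)
qed

lemma T0: assumes "(x::real) > 0" shows "1 + x < exp x"
proof -
  obtain t where "exp x = (\<Sum>m<2. x ^ m / fact m) + exp t / fact 2 * x^2"
    using Maclaurin_exp_lt[of "x" 2] assms by auto
  moreover have "exp t / fact 2 * x^2 > 0" using assms by simp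
  ultimately show ?thesis by (simp add: numeral_eq_Suc lessThan_Suc field_simps power2_eq_square)
qed

lemma phi_strict: fixes a b :: real
  assumes "0 < a" "a < b" shows "(1 - exp (-b)) / b < (1 - exp (-a)) / a"
proof -
  have "(\<lambda>x. (1 - exp (-x)) / x) a > (\<lambda>x. (1 - exp (-x)) / x) b"
  proof (rule DERIV_neg_imp_decreasing[where f="\<lambda>x. (1 - exp (-x)) / x" and a=a and b=b])
    show "a < b" by fact
  next
    fix x assume x: "a \<le> x" "x \<le> b"
    hence xp: "x > 0" using assms by auto
    have "DERIV (\<lambda>x. (1 - exp (-x)) / x) x :> ((exp (-x)) * x - (1 - exp (-x)) * 1) / (x * x)"
      using xp by (auto intro!: derivative_eq_intros)
    moreover have "((exp (-x)) * x - (1 - exp (-x)) * 1) / (x * x) < 0"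
    proof -
      have "exp (-x) * (1 + x) < 1"
      proof -
        have "1 + x < exp x" using xp by (rule T0) 
        hence "exp (-x) * (1+x) < exp (-x) * exp x" by (intro mult_strict_left_mono) auto
        also have "exp (-x) * exp x = 1" by (simp add: exp_minus_inverse mult.commute)
        finally show ?thesis .
      qed
      thus ?thesis using xp by (simp add: divide_neg_pos algebra_simps)
    qed
    ultimately show "\<exists>y. DERIV (\<lambda>x. (1 - exp (-x)) / x) x :> y \<and> y < 0" by blast
  qed
  thus ?thesis by simp
qed




lemma psi_nonneg: "r > 0 \<Longrightarrow> 0 \<le> psi r y"
  unfolding psi_def by (auto intro!: divide_nonneg_pos)

lemma psi_le_inv: "r > 0 \<Longrightarrow> psi r y \<le> 1 / r"
  unfolding psi_def by (auto intro!: divide_right_mono)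

lemma psi_le: assumes "r > 0" shows "psi r y \<le> max y 0"
proof (cases "y > 0")
  case True
  have "1 - exp (-(r*y)) < r * y" using T1[of "r*y"] True assms by simp
  then show ?thesis using True assms by (simp add: psi_def divide_simps mult.commute)
next
  case False then show ?thesis by (simp add: psi_def)
qed

lemma psi_lt: assumes "r > 0" "y > 0" shows "psi r y < y"
proof -
  have "1 - exp (-(r*y)) < r * y" using T1[of "r*y"] assms by simp
  then show ?thesis using assms by (simp add: psi_def divide_simps mult.commute)
qed

lemma psi_ge: assumes "r > 0" shows "max y 0 - r * (max y 0)^2 / 2 \<le> psi r y"
proof (cases "y > 0")
  case True
  have "exp (-(r*y)) < 1 - r*y + (r*y)^2/2" using T2[of "r*y"] True assms by simp
  then show ?thesis using True assms by (simp add: psi_def divide_simps power2_eq_square algebra_simps)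
next
  case False then show ?thesis by (simp add: psi_def)
qed

lemma psi_pos_eq: "r > 0 \<Longrightarrow> y > 0 \<Longrightarrow> psi r y = y * ((1 - exp (-(r*y))) / (r*y))"
  by (simp add: psi_def)

lemma psi_strict: assumes "0 < r" "r < s" "y > 0" shows "psi s y < psi r y"
proof -
  have "(1 - exp (-(s*y))) / (s*y) < (1 - exp (-(r*y))) / (r*y)"
    using assms by (intro phi_strict) auto
  then have "y * ((1 - exp (-(s*y))) / (s*y)) < y * ((1 - exp (-(r*y))) / (r*y))"
    using assms by (intro mult_strict_left_mono) auto
  then show ?thesis using assms psi_pos_eq[of r y] psi_pos_eq[of s y] by simp
qed

lemma psi_mono: assumes "0 < r" "r \<le> s" shows "psi s y \<le> psi r y"
  using psi_strict[of r s y] assms by (cases "y > 0"; cases "r = s") (auto simp: psi_def)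

lemma psi_cont: "isCont (psi r) y"
proof (cases "r = 0")
  case True
  then have "psi r = (\<lambda>_. 0)" by (auto simp: psi_def fun_eq_iff)
  then show ?thesis by simp
next
  case False
  then show ?thesis unfolding psi_def by (intro continuous_intros)
qed

definition L :: "real measure \<Rightarrow> real \<Rightarrow> real" where
  "L \<mu> r = (\<integral>y. exp (-(r * max y 0)) \<partial>\<mu>)"

definition G :: "real measure \<Rightarrow> real \<Rightarrow> real" where
  "G \<mu> r = (\<integral>y. psi r y \<partial>\<mu>)"

context fixes \<mu> :: "real measure" assumes nl: "nonneg_law \<mu>"
begin

lemma rd: "real_distribution \<mu>" using nl by (simp add: nonneg_law_def)

interpretation M: real_distribution \<mu> by (rule rd)

lemma prob1: "measure \<mu> UNIV = 1" using M.prob_space by simp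

lemma AE0: "AE y in \<mu>. 0 \<le> y" using nl by (simp add: nonneg_law_def)

lemma int_psi: "r > 0 \<Longrightarrow> integrable \<mu> (psi r)"
proof (rule M.integrable_const_bound[where B="1/r"])
  assume r: "r > 0"
  show "AE x in \<mu>. norm (psi r x) \<le> 1 / r"
    using psi_nonneg[OF r] psi_le_inv[OF r] by auto
  show "psi r \<in> borel_measurable \<mu>" unfolding psi_def by measurable
qed

lemma int_exp: "r \<ge> 0 \<Longrightarrow> integrable \<mu> (\<lambda>y. exp (-(r * max y 0)))"
  by (rule M.integrable_const_bound[where B="1"]) auto

lemma solves_L: "solves_eq \<mu> r \<longleftrightarrow> r = 1 - L \<mu> r"
proof -
  have "(\<integral>y. exp (- (r * y)) \<partial>\<mu>) = L \<mu> r"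
    unfolding L_def by (rule integral_cong_AE) (auto intro: eventually_mono[OF AE0])
  then show ?thesis by (simp add: solves_eq_def)
qed

lemma G_eq: assumes "r > 0" shows "G \<mu> r = (1 - L \<mu> r) / r"
proof -
  have "G \<mu> r = (\<integral>y. (1 - exp (-(r * max y 0))) \<partial>\<mu>) / r"
    unfolding G_def psi_def by simp
  also have "(\<integral>y. (1 - exp (-(r * max y 0))) \<partial>\<mu>) = 1 - L \<mu> r"
    using int_exp[of r] assms by (simp add: L_def prob1)
  finally show ?thesis .
qed

lemma solves_G: "r > 0 \<Longrightarrow> solves_eq \<mu> r \<longleftrightarrow> G \<mu> r = 1"
  by (simp add: solves_L G_eq divide_simps) auto

lemma G_mono: "0 < r \<Longrightarrow> r \<le> s \<Longrightarrow> G \<mu> s \<le> G \<mu> r"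
  unfolding G_def by (intro integral_mono int_psi psi_mono) auto

lemma G_strict: assumes "emeasure \<mu> {0<..} \<noteq> 0" "0 < r" "r < s" shows "G \<mu> s < G \<mu> r"
  unfolding G_def
  by (rule M.integral_less_AE[where A="{0<..}"]) (use assms int_psi psi_strict psi_mono in \<open>auto intro!: AE_I2 dest: psi_strict[of r s]\<close>)

lemma G_le_inv: "r > 0 \<Longrightarrow> G \<mu> r \<le> 1 / r"
proof -
  assume r: "r > 0"
  have "G \<mu> r \<le> (\<integral>y. 1/r \<partial>\<mu>)"
    unfolding G_def by (intro integral_mono int_psi psi_le_inv r) auto
  then show ?thesis by (simp add: prob1)
qed

end



context fixes \<mu> :: "real measure" assumes nl: "nonneg_law \<mu>"
begin

interpretation M: real_distribution \<mu> by (rule rd[OF nl])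

lemma meas_psi[measurable]: "psi r \<in> borel_measurable \<mu>"
  unfolding psi_def by measurable

lemma L_cont: "continuous_on {0..} (L \<mu>)"
proof (rule continuous_on_sequentiallyI)
  fix u :: "nat \<Rightarrow> real" and a assume u: "\<forall>n. u n \<in> {0..}" "a \<in> {0..}" "u \<longlonglongrightarrow> a"
  show "(\<lambda>n. L \<mu> (u n)) \<longlonglongrightarrow> L \<mu> a"
    unfolding L_def
  proof (rule integral_dominated_convergence[where w="\<lambda>_. 1"])
    show "AE x in \<mu>. (\<lambda>i. exp (- (u i * max x 0))) \<longlonglongrightarrow> exp (- (a * max x 0))"
      using u by (auto intro!: AE_I2 tendsto_intros)
    show "AE x in \<mu>. norm (exp (- (u i * max x 0))) \<le> 1" for i
      using u by (auto intro!: AE_I2)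
  qed auto
qed

lemma G_cont: assumes "0 < a" shows "continuous_on {a..b} (G \<mu>)"
proof -
  have "continuous_on {a..b} (\<lambda>r. (1 - L \<mu> r) / r)"
    using assms by (intro continuous_intros continuous_on_subset[OF L_cont]) auto
  then show ?thesis
    by (rule continuous_on_cong[THEN iffD1, rotated 2]) (use assms G_eq[OF nl] in auto)
qed

lemma mom1: "moment \<mu> 1 = (\<integral>\<^sup>+y. ennreal (max y 0) \<partial>\<mu>)"
  unfolding moment_def by (rule nn_integral_cong_AE) (auto intro: eventually_mono[OF AE0[OF nl]])

lemma pos_mass: assumes "moment \<mu> 1 \<noteq> 0" shows "emeasure \<mu> {0<..} \<noteq> 0"
proof
  assume z: "emeasure \<mu> {0<..} = 0"
  have "AE y in \<mu>. y \<notin> {0<..}"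
    by (rule AE_I[where N="{0<..}"]) (use z in auto)
  then have "moment \<mu> 1 = (\<integral>\<^sup>+y. 0 \<partial>\<mu>)"
    unfolding mom1 by (intro nn_integral_cong_AE) (auto elim!: eventually_mono simp: ennreal_eq_0_iff)
  with assms show False by simp
qed

lemma ennG: "r > 0 \<Longrightarrow> (\<integral>\<^sup>+y. ennreal (psi r y) \<partial>\<mu>) = ennreal (G \<mu> r)"
  unfolding G_def by (intro nn_integral_eq_integral int_psi[OF nl] AE_I2 psi_nonneg)

lemma G_big: assumes "1 < moment \<mu> 1" shows "\<exists>r>0. 1 < G \<mu> r"
proof -
  define f where "f = (\<lambda>n y. ennreal (psi (1 / real (Suc n)) y))"
  have inc: "incseq f"
  proof (rule incseq_SucI, rule le_funI)
    fix n y
    have "psi (1 / real (Suc n)) y \<le> psi (1 / real (Suc (Suc n))) y"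
      by (rule psi_mono) (auto simp: field_simps)
    then show "f n y \<le> f (Suc n) y" unfolding f_def by (rule ennreal_leI)
  qed
  have lim0: "(\<lambda>n. 1 / real (Suc n)) \<longlonglongrightarrow> 0"
    using LIMSEQ_inverse_real_of_nat by (simp add: inverse_eq_divide)
  have sup: "(SUP n. f n y) = ennreal (max y 0)" for y
  proof -
    have "(\<lambda>n. psi (1 / real (Suc n)) y) \<longlonglongrightarrow> max y 0"
    proof (rule tendsto_sandwich)
      show "\<forall>\<^sub>F n in sequentially. max y 0 - (1 / real (Suc n)) * (max y 0)^2 / 2 \<le> psi (1 / real (Suc n)) y"
        by (intro always_eventually allI psi_ge) auto
      show "\<forall>\<^sub>F n in sequentially. psi (1 / real (Suc n)) y \<le> max y 0"
        by (intro always_eventually allI psi_le) auto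
      show "(\<lambda>n. max y 0 - (1 / real (Suc n)) * (max y 0)^2 / 2) \<longlonglongrightarrow> max y 0"
        using tendsto_diff[OF tendsto_const[of "max y 0"] tendsto_divide[OF tendsto_mult[OF lim0 tendsto_const[of "(max y 0)^2"]] tendsto_const[of 2]]]
        by simp
    qed auto
    then have "(\<lambda>n. f n y) \<longlonglongrightarrow> ennreal (max y 0)"
      unfolding f_def by (rule tendsto_ennrealI)
    moreover have "(\<lambda>n. f n y) \<longlonglongrightarrow> (SUP n. f n y)"
      by (rule LIMSEQ_SUP) (use inc in \<open>auto simp: incseq_def le_fun_def\<close>)
    ultimately show ?thesis using LIMSEQ_unique by blast
  qed
  have "moment \<mu> 1 = (\<integral>\<^sup>+y. (SUP n. f n y) \<partial>\<mu>)" unfolding mom1 sup ..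
  also have "\<dots> = (SUP n. integral\<^sup>N \<mu> (f n))"
    by (rule nn_integral_monotone_convergence_SUP[OF inc]) (auto simp: f_def psi_def)
  finally have "1 < (SUP n. integral\<^sup>N \<mu> (f n))" using assms by simp
  then obtain n where "1 < integral\<^sup>N \<mu> (f n)" by (auto simp: less_SUP_iff)
  also have "integral\<^sup>N \<mu> (f n) = ennreal (G \<mu> (1 / real (Suc n)))"
    unfolding f_def by (rule ennG) auto
  finally show ?thesis by (intro exI[of _ "1 / real (Suc n)"]) auto
qed

lemma G_le_mom: assumes "t > 0" shows "ennreal (G \<mu> t) \<le> moment \<mu> 1"
proof -
  have "ennreal (G \<mu> t) = (\<integral>\<^sup>+y. ennreal (psi t y) \<partial>\<mu>)" using ennG[OF assms] by simp
  also have "\<dots> \<le> (\<integral>\<^sup>+y. ennreal (max y 0) \<partial>\<mu>)"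
    by (intro nn_integral_mono ennreal_leI psi_le assms)
  finally show ?thesis unfolding mom1 .
qed

lemma G_small: assumes "moment \<mu> 1 \<le> 1" "r > 0" shows "G \<mu> r < 1"
proof (cases "emeasure \<mu> {0<..} = 0")
  case True
  have "AE y in \<mu>. y \<notin> {0<..}"
    by (rule AE_I[where N="{0<..}"]) (use True in auto)
  then have "G \<mu> r = (\<integral>y. 0 \<partial>\<mu>)"
    unfolding G_def by (intro integral_cong_AE) (auto elim!: eventually_mono simp: psi_def)
  then show ?thesis by simp
next
  case False
  have "ennreal (G \<mu> (r/2)) \<le> moment \<mu> 1" by (rule G_le_mom) (use assms in simp)
  then have "ennreal (G \<mu> (r/2)) \<le> 1" using assms(1) by (rule order_trans)
  then have "G \<mu> (r/2) \<le> 1" by (simp add: ennreal_le_1)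
  moreover have "G \<mu> r < G \<mu> (r/2)" using G_strict[OF nl False] assms by auto
  ultimately show ?thesis by simp
qed

lemma ex_unique: assumes "1 < moment \<mu> 1" shows "\<exists>!\<rho>. 0 < \<rho> \<and> solves_eq \<mu> \<rho>"
proof -
  obtain r0 where r0: "r0 > 0" "1 < G \<mu> r0" using G_big[OF assms] by auto
  have "G \<mu> (r0 + 2) \<le> 1 / (r0 + 2)" using G_le_inv[OF nl, of "r0+2"] r0 by simp
  also have "\<dots> \<le> 1" using r0 by simp
  finally obtain x where x: "r0 \<le> x" "x \<le> r0 + 2" "G \<mu> x = 1"
    using IVT2'[of "G \<mu>" "r0+2" 1 r0] G_cont[OF r0(1), of "r0+2"] r0 by auto
  have "0 < moment \<mu> 1" using order.strict_trans[OF zero_less_one assms] .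
  then have pm: "emeasure \<mu> {0<..} \<noteq> 0" using pos_mass by auto
  show ?thesis
  proof (rule ex1I[of _ x])
    show "0 < x \<and> solves_eq \<mu> x" using x r0 solves_G[OF nl, of x] by auto
    fix y assume y: "0 < y \<and> solves_eq \<mu> y"
    then have "G \<mu> y = 1" using solves_G[OF nl, of y] by auto
    then show "y = x" using G_strict[OF nl pm, of x y] G_strict[OF nl pm, of y x] x y r0
      by (cases "x < y"; cases "y < x") auto
  qed
qed

end



lemma part4:
  fixes \<nu> :: "nat \<Rightarrow> real measure" and \<rho>s :: "nat \<Rightarrow> real" and \<mu>' :: "real measure"
  assumes \<nu>: "\<forall>n. nonneg_law (\<nu> n) \<and> 0 < \<rho>s n \<and> solves_eq (\<nu> n) (\<rho>s n)"
    and nl: "nonneg_law \<mu>'" and wc: "weak_conv_m \<nu> \<mu>'"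
  shows "(1 < moment \<mu>' 1 \<longrightarrow> (\<exists>\<rho>. 0 < \<rho> \<and> solves_eq \<mu>' \<rho> \<and> \<rho>s \<longlonglongrightarrow> \<rho>))
          \<and> (moment \<mu>' 1 \<le> 1 \<longrightarrow> \<rho>s \<longlonglongrightarrow> 0)"
proof -
  have nln: "nonneg_law (\<nu> n)" for n using \<nu> by auto
  have Gn1: "G (\<nu> n) (\<rho>s n) = 1" for n using \<nu> solves_G[OF nln] by auto
  have Gconv: "(\<lambda>n. G (\<nu> n) r) \<longlonglongrightarrow> G \<mu>' r" if r: "r > 0" for r
    unfolding G_def
    by (rule weak_conv_imp_integral_bdd_continuous_conv[where B = "1/r"])
       (use rd[OF nln] rd[OF nl] wc psi_cont psi_nonneg[OF r] psi_le_inv[OF r] in auto)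
  have above: "\<forall>\<^sub>F n in sequentially. c < \<rho>s n" if c: "0 < c" "1 < G \<mu>' c" for c
  proof -
    have "\<forall>\<^sub>F n in sequentially. 1 < G (\<nu> n) c" using order_tendstoD(1)[OF Gconv[OF c(1)] c(2)] .
    then show ?thesis
    proof (rule eventually_mono)
      fix n assume "1 < G (\<nu> n) c"
      then show "c < \<rho>s n" using G_mono[OF nln[of n], of "\<rho>s n" c] Gn1[of n] c \<nu> by force
    qed
  qed
  have below: "\<forall>\<^sub>F n in sequentially. \<rho>s n < c" if c: "0 < c" "G \<mu>' c < 1" for c
  proof -
    have "\<forall>\<^sub>F n in sequentially. G (\<nu> n) c < 1" using order_tendstoD(2)[OF Gconv[OF c(1)] c(2)] .
    then show ?thesis
    proof (rule eventually_mono)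
      fix n assume "G (\<nu> n) c < 1"
      then show "\<rho>s n < c" using G_mono[OF nln[of n], of c "\<rho>s n"] Gn1[of n] c by force
    qed
  qed
  have P1: "\<exists>\<rho>. 0 < \<rho> \<and> solves_eq \<mu>' \<rho> \<and> \<rho>s \<longlonglongrightarrow> \<rho>" if m: "1 < moment \<mu>' 1"
  proof -
    obtain \<rho> where \<rho>: "0 < \<rho>" "solves_eq \<mu>' \<rho>" using ex_unique[OF nl m] by auto
    have G1: "G \<mu>' \<rho> = 1" using \<rho> solves_G[OF nl] by auto
    have "0 < moment \<mu>' 1" using order.strict_trans[OF zero_less_one m] .
    then have pm: "emeasure \<mu>' {0<..} \<noteq> 0" using pos_mass[OF nl] by auto
    have "\<rho>s \<longlonglongrightarrow> \<rho>"
    proof (rule order_tendstoI)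
      fix a assume a: "a < \<rho>"
      define c where "c = max a (\<rho>/2)"
      have c: "0 < c" "c < \<rho>" "a \<le> c" using a \<rho> by (auto simp: c_def)
      have "1 < G \<mu>' c" using G_strict[OF nl pm c(1) c(2)] G1 by simp
      from above[OF c(1) this] show "\<forall>\<^sub>F n in sequentially. a < \<rho>s n"
        by (rule eventually_mono) (use c in auto)
    next
      fix a assume a: "\<rho> < a"
      have "G \<mu>' a < 1" using G_strict[OF nl pm \<rho>(1) a] G1 by simp
      from below[OF _ this] show "\<forall>\<^sub>F n in sequentially. \<rho>s n < a" using a \<rho> by simp
    qed
    then show ?thesis using \<rho> by auto
  qed
  have P2: "\<rho>s \<longlonglongrightarrow> 0" if m: "moment \<mu>' 1 \<le> 1"
  proof (rule order_tendstoI)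
    fix a :: real assume "a < 0"
    then show "\<forall>\<^sub>F n in sequentially. a < \<rho>s n" using \<nu> by (auto intro!: always_eventually) (meson less_trans)
  next
    fix a :: real assume a: "0 < a"
    show "\<forall>\<^sub>F n in sequentially. \<rho>s n < a" using below[OF a G_small[OF nl m a]] .
  qed
  show ?thesis using P1 P2 by blast
qed




lemma alg1:
  fixes a m2 m3 :: real
  assumes "0 < a" "0 < m2" "0 < m3" "8 * a * m3 \<le> 3 * m2^2"
  defines "r1 \<equiv> (3 * m2 - sqrt (9 * m2\<^sup>2 - 24 * a * m3)) / (2 * m3)"
  shows "0 < r1" "m3 * r1^2 - 3 * m2 * r1 + 6 * a = 0"
proof -
  define s where "s = sqrt (9 * m2\<^sup>2 - 24 * a * m3)"
  have e: "24 * a * m3 = 3 * (8 * a * m3)" by simp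
  have d: "0 \<le> 9 * m2\<^sup>2 - 24 * a * m3" using assms(4) unfolding e by linarith
  have s2: "s^2 = 9 * m2\<^sup>2 - 24 * a * m3" unfolding s_def by (rule real_sqrt_pow2[OF d])
  have s0: "0 \<le> s" unfolding s_def by (rule real_sqrt_ge_zero[OF d])
  have "s^2 < (3*m2)^2" using s2 assms by (simp add: power_mult_distrib)
  then have s3: "s < 3 * m2" using s0 assms by (smt (verit) power_mono)
  have r: "r1 = (3 * m2 - s) / (2 * m3)" by (simp add: r1_def s_def)
  show "0 < r1" using r s3 assms by simp
  have R: "2 * m3 * r1 = 3 * m2 - s" unfolding r using assms by simp
  have "4 * m3 * (m3 * r1^2 - 3 * m2 * r1 + 6 * a) = (2 * m3 * r1)^2 - 6 * m2 * (2 * m3 * r1) + 24 * a * m3"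
    by (simp add: power2_eq_square algebra_simps)
  also have "\<dots> = (3*m2 - s)^2 - 6 * m2 * (3 * m2 - s) + 24 * a * m3" unfolding R ..
  also have "\<dots> = s^2 - 9 * m2^2 + 24 * a * m3"
    by (simp add: power2_eq_square algebra_simps)
  also have "\<dots> = 0" using s2 by simp
  finally have "4 * m3 * (m3 * r1^2 - 3 * m2 * r1 + 6 * a) = 0" .
  then show "m3 * r1^2 - 3 * m2 * r1 + 6 * a = 0" using assms by simp
qed

lemma alg2:
  fixes a m2 m3 :: real
  assumes "0 < a" "0 < m2" "0 < m3" "8 * a * m3 \<le> 3 * m2^2"
  shows "(3 * m2 - sqrt (9 * m2\<^sup>2 - 24 * a * m3)) / (2 * m3)
                 = 4 * a / (m2 + sqrt (m2\<^sup>2 - 8 / 3 * a * m3))"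
proof -
  define t where "t = sqrt (m2\<^sup>2 - 8 / 3 * a * m3)"
  have e: "8 / 3 * a * m3 = (8 * a * m3) / 3" by simp
  have d: "0 \<le> m2\<^sup>2 - 8 / 3 * a * m3" using assms(4) unfolding e by linarith
  have t2: "t^2 = m2\<^sup>2 - 8 / 3 * a * m3" unfolding t_def by (rule real_sqrt_pow2[OF d])
  have t0: "0 \<le> t" unfolding t_def by (rule real_sqrt_ge_zero[OF d])
  have "9 * m2\<^sup>2 - 24 * a * m3 = 3^2 * (m2\<^sup>2 - 8 / 3 * a * m3)" by simp
  then have s: "sqrt (9 * m2\<^sup>2 - 24 * a * m3) = 3 * t"
    unfolding t_def by (simp only: real_sqrt_mult) simp
  have "(3 * m2 - 3 * t) / (2 * m3) = 4 * a / (m2 + t)"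
  proof -
    have "3 * (m2 - t) * (m2 + t) = 8 * a * m3" using t2 by (simp add: power2_eq_square algebra_simps)
    then show ?thesis using assms t0 by (simp add: field_simps)
  qed
  then show ?thesis using s t_def by simp
qed

lemma alg3:
  fixes a m2 m3 :: real
  assumes "0 < a" "0 < m2" "0 < m3" "8 * a * m3 \<le> 3 * m2^2"
  shows "4 * a / (m2 + sqrt (m2\<^sup>2 - 8 / 3 * a * m3))
                 \<le> 2 * a / m2 * (1 + 8 * a * m3 / (3 * m2\<^sup>2))"
proof -
  define t where "t = sqrt (m2\<^sup>2 - 8 / 3 * a * m3)"
  have e: "8 / 3 * a * m3 = (8 * a * m3) / 3" by simp
  have d: "0 \<le> m2\<^sup>2 - 8 / 3 * a * m3" using assms(4) unfolding e by linarith
  have t2: "t^2 = m2\<^sup>2 - 8 / 3 * a * m3" unfolding t_def by (rule real_sqrt_pow2[OF d])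
  have t0: "0 \<le> t" unfolding t_def by (rule real_sqrt_ge_zero[OF d])
  have p: "0 \<le> 8 / 3 * a * m3" using assms(1,3) by simp
  have "t^2 \<le> m2^2" using t2 p by linarith
  then have tm: "t \<le> m2" by (rule power2_le_imp_le) (use assms(2) in linarith)
  have m2z: "m2 \<noteq> 0" "m2^2 \<noteq> 0" using assms(2) by auto
  have x: "8 * a * m3 / (3 * m2\<^sup>2) = 1 - t^2 / m2^2"
  proof -
    have "8 * a * m3 / (3 * m2\<^sup>2) = (m2^2 - t^2) / m2^2" unfolding t2 e by simp
    also have "\<dots> = 1 - t^2 / m2^2" using m2z by (simp add: diff_divide_distrib)
    finally show ?thesis .
  qed
  have key: "0 \<le> t * (m2 - t) * (2 * m2 + t)"
  proof -
    have "0 \<le> m2 - t" "0 \<le> 2 * m2 + t" using tm t0 assms(2) by linarith+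
    then show ?thesis using t0 by (intro mult_nonneg_nonneg)
  qed
  have id1: "(2 * m2^2 - t^2) * (m2 + t) - 2 * m2^3 = t * (m2 - t) * (2 * m2 + t)"
    by (simp add: algebra_simps power2_eq_square power3_eq_cube)
  have k2: "2 * m2^3 \<le> (2 * m2^2 - t^2) * (m2 + t)" using key id1 by linarith
  have k3: "(2*a) * (2 * m2^3) \<le> (2*a) * ((2 * m2^2 - t^2) * (m2 + t))"
    by (rule mult_left_mono[OF k2]) (use assms(1) in linarith)
  have pos: "0 < m2 + t" "0 < m2^3" using assms(2) t0 by auto
  have eq: "2 * a / m2 * (2 - t^2 / m2^2) = (2 * a * (2 * m2^2 - t^2)) / m2^3"
  proof -
    have "2 - t^2 / m2^2 = (2 * m2^2 - t^2) / m2^2" using m2z by (simp add: diff_divide_distrib)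
    then show ?thesis by (simp add: power2_eq_square power3_eq_cube mult.assoc)
  qed
  have "4 * a / (m2 + t) \<le> (2 * a * (2 * m2^2 - t^2)) / m2^3"
  proof (rule mult_imp_div_pos_le[OF pos(1)])
    have "4 * a \<le> (2 * a * (2 * m2^2 - t^2)) * (m2 + t) / m2^3"
      using k3 pos(2) by (simp add: pos_le_divide_eq mult.commute mult.left_commute)
    then show "4 * a \<le> 2 * a * (2 * m2^2 - t^2) / m2^3 * (m2 + t)" by simp
  qed
  then have "4 * a / (m2 + t) \<le> 2 * a / m2 * (2 - t^2 / m2^2)" unfolding eq .
  moreover have "1 + 8 * a * m3 / (3 * m2\<^sup>2) = 2 - t^2 / m2^2" unfolding x by simp
  ultimately show ?thesis unfolding t_def by simp
qed




context fixes \<mu> :: "real measure" assumes nl: "nonneg_law \<mu>"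
begin

interpretation M: real_distribution \<mu> by (rule rd[OF nl])

lemma momz: "moment \<mu> k = (\<integral>\<^sup>+y. ennreal ((max y 0)^k) \<partial>\<mu>)"
  unfolding moment_def by (rule nn_integral_cong_AE) (auto intro: eventually_mono[OF AE0[OF nl]])

lemma int_mom: assumes "moment \<mu> k < \<infinity>"
  shows "integrable \<mu> (\<lambda>y. (max y 0)^k)" "enn2real (moment \<mu> k) = (\<integral>y. (max y 0)^k \<partial>\<mu>)"
    "moment \<mu> k = ennreal (\<integral>y. (max y 0)^k \<partial>\<mu>)"
proof -
  show i: "integrable \<mu> (\<lambda>y. (max y 0)^k)"
    by (rule integrableI_nonneg) (use assms in \<open>auto simp: momz\<close>)
  show "moment \<mu> k = ennreal (\<integral>y. (max y 0)^k \<partial>\<mu>)"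
    unfolding momz by (rule nn_integral_eq_integral[OF i]) auto
  then show "enn2real (moment \<mu> k) = (\<integral>y. (max y 0)^k \<partial>\<mu>)" by simp
qed

lemma mom_down: assumes "moment \<mu> (Suc k) < \<infinity>" shows "moment \<mu> k < \<infinity>"
proof -
  have i: "integrable \<mu> (\<lambda>y. 1 + (max y 0)^(Suc k))"
    using int_mom(1)[OF assms] by auto
  have "integrable \<mu> (\<lambda>y. (max y 0)^k)"
  proof (rule Bochner_Integration.integrable_bound[OF i])
    show "AE y in \<mu>. norm ((max y 0)^k) \<le> norm (1 + (max y 0)^(Suc k))"
    proof (rule AE_I2)
      fix y :: real
      have z: "0 \<le> max y 0" by simp
      have "(max y 0)^k \<le> 1 + (max y 0)^(Suc k)"
      proof (cases "max y 0 \<le> 1")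
        case True then have "(max y 0)^k \<le> 1" using z by (simp add: power_le_one)
        then show ?thesis using z by (smt (verit) zero_le_power)
      next
        case False then have "(max y 0)^k \<le> (max y 0)^(Suc k)" by (intro power_increasing) auto
        then show ?thesis by simp
      qed
      then show "norm ((max y 0)^k) \<le> norm (1 + (max y 0)^(Suc k))" using z by simp
    qed
  qed (use assms in auto)
  then have "(\<integral>\<^sup>+y. ennreal ((max y 0)^k) \<partial>\<mu>) < \<infinity>"
    using nn_integral_eq_integral[of \<mu> "\<lambda>y. (max y 0)^k"] by simp
  then show ?thesis by (simp add: momz)
qed

definition mm :: "nat \<Rightarrow> real" where "mm k = (\<integral>y. (max y 0)^k \<partial>\<mu>)"

lemma ineq2: assumes "moment \<mu> 2 < \<infinity>" "emeasure \<mu> {0<..} \<noteq> 0" "r > 0"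
  shows "1 - L \<mu> r > r * mm 1 - r^2 * mm 2 / 2"
proof -
  have i1: "integrable \<mu> (\<lambda>y. (max y 0)^1)" using int_mom(1)[OF mom_down[of 1, unfolded Suc_1]] assms by simp
  have i2: "integrable \<mu> (\<lambda>y. (max y 0)^2)" using int_mom(1) assms by simp
  have "L \<mu> r < (\<integral>y. 1 - r * (max y 0)^1 + r^2/2 * (max y 0)^2 \<partial>\<mu>)"
    unfolding L_def
  proof (rule M.integral_less_AE[where A="{0<..}"])
    show "integrable \<mu> (\<lambda>y. exp (- (r * max y 0)))" using int_exp[OF nl] assms by simp
    show "integrable \<mu> (\<lambda>y. 1 - r * (max y 0)^1 + r^2/2 * (max y 0)^2)"
      using i1 i2 by auto
    show "AE y in \<mu>. y \<in> {0<..} \<longrightarrow> exp (- (r * max y 0)) \<noteq> 1 - r * (max y 0)^1 + r^2/2 * (max y 0)^2"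
    proof (rule AE_I2, rule impI)
      fix y :: real assume "y \<in> {0<..}"
      then have "exp (-(r*y)) < 1 - r*y + (r*y)^2/2" using T2[of "r*y"] assms by simp
      then show "exp (- (r * max y 0)) \<noteq> 1 - r * (max y 0)^1 + r^2/2 * (max y 0)^2"
        using \<open>y \<in> {0<..}\<close> by (simp add: power_mult_distrib)
    qed
    show "AE y in \<mu>. exp (- (r * max y 0)) \<le> 1 - r * (max y 0)^1 + r^2/2 * (max y 0)^2"
    proof (rule AE_I2)
      fix y :: real
      show "exp (- (r * max y 0)) \<le> 1 - r * (max y 0)^1 + r^2/2 * (max y 0)^2"
      proof (cases "y > 0")
        case True
        then have "exp (-(r*y)) < 1 - r*y + (r*y)^2/2" using T2[of "r*y"] assms by simp
        then show ?thesis using True by (simp add: power_mult_distrib)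
      qed simp
    qed
  qed (use assms in auto)
  also have "(\<integral>y. 1 - r * (max y 0)^1 + r^2/2 * (max y 0)^2 \<partial>\<mu>) = 1 - r * mm 1 + r^2/2 * mm 2"
    using i1 i2 by (simp add: mm_def prob1[OF nl])
  finally show ?thesis by simp
qed

lemma ineq3: assumes "moment \<mu> 3 < \<infinity>" "emeasure \<mu> {0<..} \<noteq> 0" "r > 0"
  shows "1 - L \<mu> r < r * mm 1 - r^2 * mm 2 / 2 + r^3 * mm 3 / 6"
proof -
  have f2: "moment \<mu> 2 < \<infinity>" using mom_down[of 2] assms by simp
  have i1: "integrable \<mu> (\<lambda>y. (max y 0)^1)" using int_mom(1)[OF mom_down[of 1, unfolded Suc_1]] f2 by simp
  have i2: "integrable \<mu> (\<lambda>y. (max y 0)^2)" using int_mom(1) f2 by simp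
  have i3: "integrable \<mu> (\<lambda>y. (max y 0)^3)" using int_mom(1) assms by simp
  have "(\<integral>y. 1 - r * (max y 0)^1 + r^2/2 * (max y 0)^2 - r^3/6 * (max y 0)^3 \<partial>\<mu>) < L \<mu> r"
    unfolding L_def
  proof (rule M.integral_less_AE[where A="{0<..}"])
    show "integrable \<mu> (\<lambda>y. exp (- (r * max y 0)))" using int_exp[OF nl] assms by simp
    show "integrable \<mu> (\<lambda>y. 1 - r * (max y 0)^1 + r^2/2 * (max y 0)^2 - r^3/6 * (max y 0)^3)"
      using i1 i2 i3 by auto
    show "AE y in \<mu>. y \<in> {0<..} \<longrightarrow> 1 - r * (max y 0)^1 + r^2/2 * (max y 0)^2 - r^3/6 * (max y 0)^3 \<noteq> exp (- (r * max y 0))"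
    proof (rule AE_I2, rule impI)
      fix y :: real assume "y \<in> {0<..}"
      then have "exp (-(r*y)) > 1 - r*y + (r*y)^2/2 - (r*y)^3/6" using T3[of "r*y"] assms by simp
      then show "1 - r * (max y 0)^1 + r^2/2 * (max y 0)^2 - r^3/6 * (max y 0)^3 \<noteq> exp (- (r * max y 0))"
        using \<open>y \<in> {0<..}\<close> by (simp add: power_mult_distrib)
    qed
    show "AE y in \<mu>. 1 - r * (max y 0)^1 + r^2/2 * (max y 0)^2 - r^3/6 * (max y 0)^3 \<le> exp (- (r * max y 0))"
    proof (rule AE_I2)
      fix y :: real
      show "1 - r * (max y 0)^1 + r^2/2 * (max y 0)^2 - r^3/6 * (max y 0)^3 \<le> exp (- (r * max y 0))"
      proof (cases "y > 0")
        case True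
        then have "exp (-(r*y)) > 1 - r*y + (r*y)^2/2 - (r*y)^3/6" using T3[of "r*y"] assms by simp
        then show ?thesis using True by (simp add: power_mult_distrib)
      qed simp
    qed
  qed (use assms in auto)
  moreover have "(\<integral>y. 1 - r * (max y 0)^1 + r^2/2 * (max y 0)^2 - r^3/6 * (max y 0)^3 \<partial>\<mu>) = 1 - r * mm 1 + r^2/2 * mm 2 - r^3/6 * mm 3"
    using i1 i2 i3 by (simp add: mm_def prob1[OF nl])
  ultimately show ?thesis by simp
qed

end



theorem lemma4p1:
  fixes \<mu> :: "real measure"
  assumes law: "nonneg_law \<mu>"
    and mean: "1 < moment \<mu> 1"
  shows "(\<exists>!\<rho>. 0 < \<rho> \<and> solves_eq \<mu> \<rho>)
    \<and> (\<forall>\<rho>. 0 < \<rho> \<and> solves_eq \<mu> \<rho> \<longrightarrow>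
          (let m1 = enn2real (moment \<mu> 1); m2 = enn2real (moment \<mu> 2);
               m3 = enn2real (moment \<mu> 3) in
            (moment \<mu> 2 < \<infinity> \<longrightarrow> \<rho> > 2 * (m1 - 1) / m2)
          \<and> (moment \<mu> 3 < \<infinity> \<and> 8 * (m1 - 1) * m3 \<le> 3 * m2\<^sup>2 \<longrightarrow>
               \<rho> < (3 * m2 - sqrt (9 * m2\<^sup>2 - 24 * (m1 - 1) * m3)) / (2 * m3)
             \<and> (3 * m2 - sqrt (9 * m2\<^sup>2 - 24 * (m1 - 1) * m3)) / (2 * m3)
                 = 4 * (m1 - 1) / (m2 + sqrt (m2\<^sup>2 - 8 / 3 * (m1 - 1) * m3))
             \<and> 4 * (m1 - 1) / (m2 + sqrt (m2\<^sup>2 - 8 / 3 * (m1 - 1) * m3))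
                 \<le> 2 * (m1 - 1) / m2 * (1 + 8 * (m1 - 1) * m3 / (3 * m2\<^sup>2)))))
    \<and> (\<forall>(\<nu> :: nat \<Rightarrow> real measure) (\<rho>s :: nat \<Rightarrow> real) (\<mu>' :: real measure).
          (\<forall>n. nonneg_law (\<nu> n) \<and> 1 < moment (\<nu> n) 1 \<and> 0 < \<rho>s n \<and> solves_eq (\<nu> n) (\<rho>s n))
          \<and> nonneg_law \<mu>' \<and> weak_conv_m \<nu> \<mu>' \<longrightarrow>
            (1 < moment \<mu>' 1 \<longrightarrow> (\<exists>\<rho>. 0 < \<rho> \<and> solves_eq \<mu>' \<rho> \<and> \<rho>s \<longlonglongrightarrow> \<rho>))
          \<and> (moment \<mu>' 1 \<le> 1 \<longrightarrow> \<rho>s \<longlonglongrightarrow> 0))"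
proof -
  have P1: "\<exists>!\<rho>. 0 < \<rho> \<and> solves_eq \<mu> \<rho>" by (rule ex_unique[OF law mean])
  have "0 < moment \<mu> 1" using order.strict_trans[OF zero_less_one mean] .
  then have pm: "emeasure \<mu> {0<..} \<noteq> 0" using pos_mass[OF law] by auto
  have P3: "\<forall>(\<nu> :: nat \<Rightarrow> real measure) (\<rho>s :: nat \<Rightarrow> real) (\<mu>' :: real measure).
          (\<forall>n. nonneg_law (\<nu> n) \<and> 1 < moment (\<nu> n) 1 \<and> 0 < \<rho>s n \<and> solves_eq (\<nu> n) (\<rho>s n))
          \<and> nonneg_law \<mu>' \<and> weak_conv_m \<nu> \<mu>' \<longrightarrow>
            (1 < moment \<mu>' 1 \<longrightarrow> (\<exists>\<rho>. 0 < \<rho> \<and> solves_eq \<mu>' \<rho> \<and> \<rho>s \<longlonglongrightarrow> \<rho>))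
          \<and> (moment \<mu>' 1 \<le> 1 \<longrightarrow> \<rho>s \<longlonglongrightarrow> 0)"
  proof (intro allI impI)
    fix \<nu> :: "nat \<Rightarrow> real measure" and \<rho>s :: "nat \<Rightarrow> real" and \<mu>' :: "real measure"
    assume h: "(\<forall>n. nonneg_law (\<nu> n) \<and> 1 < moment (\<nu> n) 1 \<and> 0 < \<rho>s n \<and> solves_eq (\<nu> n) (\<rho>s n))
          \<and> nonneg_law \<mu>' \<and> weak_conv_m \<nu> \<mu>'"
    show "(1 < moment \<mu>' 1 \<longrightarrow> (\<exists>\<rho>. 0 < \<rho> \<and> solves_eq \<mu>' \<rho> \<and> \<rho>s \<longlonglongrightarrow> \<rho>))
          \<and> (moment \<mu>' 1 \<le> 1 \<longrightarrow> \<rho>s \<longlonglongrightarrow> 0)"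
      by (rule part4[of \<nu> \<rho>s \<mu>']) (use h in auto)
  qed
  have P2: "0 < \<rho> \<and> solves_eq \<mu> \<rho> \<longrightarrow>
          (let m1 = enn2real (moment \<mu> 1); m2 = enn2real (moment \<mu> 2);
               m3 = enn2real (moment \<mu> 3) in
            (moment \<mu> 2 < \<infinity> \<longrightarrow> \<rho> > 2 * (m1 - 1) / m2)
          \<and> (moment \<mu> 3 < \<infinity> \<and> 8 * (m1 - 1) * m3 \<le> 3 * m2\<^sup>2 \<longrightarrow>
               \<rho> < (3 * m2 - sqrt (9 * m2\<^sup>2 - 24 * (m1 - 1) * m3)) / (2 * m3)
             \<and> (3 * m2 - sqrt (9 * m2\<^sup>2 - 24 * (m1 - 1) * m3)) / (2 * m3)
                 = 4 * (m1 - 1) / (m2 + sqrt (m2\<^sup>2 - 8 / 3 * (m1 - 1) * m3))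
             \<and> 4 * (m1 - 1) / (m2 + sqrt (m2\<^sup>2 - 8 / 3 * (m1 - 1) * m3))
                 \<le> 2 * (m1 - 1) / m2 * (1 + 8 * (m1 - 1) * m3 / (3 * m2\<^sup>2))))" for \<rho>
  proof (intro impI)
    assume \<rho>: "0 < \<rho> \<and> solves_eq \<mu> \<rho>"
    then have \<rho>0: "0 < \<rho>" and eq\<rho>: "\<rho> = 1 - L \<mu> \<rho>" using solves_L[OF law] by auto
    have G\<rho>: "G \<mu> \<rho> = 1" using \<rho> solves_G[OF law] by auto
    define m1 where "m1 = enn2real (moment \<mu> 1)"
    define m2 where "m2 = enn2real (moment \<mu> 2)"
    define m3 where "m3 = enn2real (moment \<mu> 3)"
    have II: "moment \<mu> 2 < \<infinity> \<Longrightarrow> m1 = mm \<mu> 1 \<and> m2 = mm \<mu> 2 \<and> 1 < m1 \<and> 0 < m2 \<and> \<rho> > 2 * (m1 - 1) / m2"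
    proof -
      assume f2: "moment \<mu> 2 < \<infinity>"
      have f1: "moment \<mu> 1 < \<infinity>" using mom_down[OF law, of 1, unfolded Suc_1] f2 by simp
      have e1: "m1 = mm \<mu> 1" using int_mom(2)[OF law f1] by (simp add: m1_def mm_def[OF law])
      have e2: "m2 = mm \<mu> 2" using int_mom(2)[OF law f2] by (simp add: m2_def mm_def[OF law])
      have "moment \<mu> 1 = ennreal m1" using int_mom(3)[OF law f1] by (simp add: e1 mm_def[OF law])
      then have g1: "1 < m1" using mean by (metis one_less_ennreal)
      have "1 - L \<mu> \<rho> > \<rho> * m1 - \<rho>^2 * m2 / 2" using ineq2[OF law f2 pm \<rho>0] e1 e2 by simp
      then have "\<rho> > \<rho> * m1 - \<rho>^2 * m2 / 2" using eq\<rho> by linarith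
      moreover have "\<rho> * m1 - \<rho>^2 * m2 / 2 = \<rho> + \<rho> * (m1 - 1) - \<rho> * (\<rho> * m2 / 2)"
        by (simp add: power2_eq_square algebra_simps)
      ultimately have "\<rho> * (m1 - 1) < \<rho> * (\<rho> * m2 / 2)" by linarith
      then have lt: "m1 - 1 < \<rho> * m2 / 2" using \<rho>0 by simp
      then have "0 < \<rho> * m2" using g1 by linarith
      then have m2p: "0 < m2" using \<rho>0 zero_less_mult_pos by blast
      have "2 * (m1 - 1) / m2 < \<rho>" using lt m2p by (simp add: divide_less_eq algebra_simps)
      then show ?thesis using e1 e2 g1 m2p by simp
    qed
    have III: "\<rho> < (3 * m2 - sqrt (9 * m2\<^sup>2 - 24 * (m1 - 1) * m3)) / (2 * m3)
             \<and> (3 * m2 - sqrt (9 * m2\<^sup>2 - 24 * (m1 - 1) * m3)) / (2 * m3)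
                 = 4 * (m1 - 1) / (m2 + sqrt (m2\<^sup>2 - 8 / 3 * (m1 - 1) * m3))
             \<and> 4 * (m1 - 1) / (m2 + sqrt (m2\<^sup>2 - 8 / 3 * (m1 - 1) * m3))
                 \<le> 2 * (m1 - 1) / m2 * (1 + 8 * (m1 - 1) * m3 / (3 * m2\<^sup>2))"
      if f3: "moment \<mu> 3 < \<infinity>" and hyp: "8 * (m1 - 1) * m3 \<le> 3 * m2\<^sup>2"
    proof -
      have f2: "moment \<mu> 2 < \<infinity>" using mom_down[OF law, of 2] f3 by (simp add: numeral_3_eq_3)
      obtain e1: "m1 = mm \<mu> 1" and e2: "m2 = mm \<mu> 2" and g1: "1 < m1" and m2p: "0 < m2"
        using II[OF f2] by auto
      have e3: "m3 = mm \<mu> 3" using int_mom(2)[OF law f3] by (simp add: m3_def mm_def[OF law])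
      have ub: "\<And>r. 0 < r \<Longrightarrow> 1 - L \<mu> r < r * m1 - r^2 * m2 / 2 + r^3 * m3 / 6"
        using ineq3[OF law f3 pm] e1 e2 e3 by simp
      have "\<rho> * m1 - \<rho>^2 * m2 / 2 < \<rho> * m1 - \<rho>^2 * m2 / 2 + \<rho>^3 * m3 / 6"
        using ineq2[OF law f2 pm \<rho>0] ub[OF \<rho>0] e1 e2 by simp
      then have "0 < \<rho>^3 * m3" by simp
      then have m3p: "0 < m3" using \<rho>0 by (simp add: zero_less_mult_iff)
      have a0: "0 < m1 - 1" using g1 by simp
      define r1 where "r1 = (3 * m2 - sqrt (9 * m2\<^sup>2 - 24 * (m1 - 1) * m3)) / (2 * m3)"
      have r1: "0 < r1" "m3 * r1^2 - 3 * m2 * r1 + 6 * (m1 - 1) = 0"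
        using alg1[OF a0 m2p m3p hyp] unfolding r1_def by auto
      have "r1 * m1 - r1^2 * m2 / 2 + r1^3 * m3 / 6 = r1 + r1 * (m3 * r1^2 - 3 * m2 * r1 + 6 * (m1 - 1)) / 6"
        by (simp add: power2_eq_square power3_eq_cube field_simps)
      also have "\<dots> = r1" using r1 by simp
      finally have "1 - L \<mu> r1 < r1" using ub[OF r1(1)] by simp
      then have "G \<mu> r1 < 1" using G_eq[OF law r1(1)] r1(1) by (simp add: divide_less_eq)
      then have "\<rho> < r1" using G_mono[OF law r1(1), of \<rho>] G\<rho> by force
      then show ?thesis
        using alg2[OF a0 m2p m3p hyp] alg3[OF a0 m2p m3p hyp] unfolding r1_def by simp
    qed
    show "let m1 = enn2real (moment \<mu> 1); m2 = enn2real (moment \<mu> 2);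
               m3 = enn2real (moment \<mu> 3) in
            (moment \<mu> 2 < \<infinity> \<longrightarrow> \<rho> > 2 * (m1 - 1) / m2)
          \<and> (moment \<mu> 3 < \<infinity> \<and> 8 * (m1 - 1) * m3 \<le> 3 * m2\<^sup>2 \<longrightarrow>
               \<rho> < (3 * m2 - sqrt (9 * m2\<^sup>2 - 24 * (m1 - 1) * m3)) / (2 * m3)
             \<and> (3 * m2 - sqrt (9 * m2\<^sup>2 - 24 * (m1 - 1) * m3)) / (2 * m3)
                 = 4 * (m1 - 1) / (m2 + sqrt (m2\<^sup>2 - 8 / 3 * (m1 - 1) * m3))
             \<and> 4 * (m1 - 1) / (m2 + sqrt (m2\<^sup>2 - 8 / 3 * (m1 - 1) * m3))
                 \<le> 2 * (m1 - 1) / m2 * (1 + 8 * (m1 - 1) * m3 / (3 * m2\<^sup>2)))"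
      unfolding Let_def m1_def[symmetric] m2_def[symmetric] m3_def[symmetric]
      using II III by blast
  qed
  show ?thesis using P1 P2 P3 by blast
qed


end
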